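(* Let $G$ be a symmetrically factorizable algebraic group with subgroups $G_\pm$ and conjugating element $\theta$, and let $\rho(x)=(\theta x)_+^{-1}$ on $G_+$. If $\theta^2$ is central in $G$, then \[ (\rho(y))^{-1}\rho\bigl(\rho(x)(\rho(xy))^{-1}\bigr)=\rho^{-1}(x) \] on a Zariski open subset of $G_+\times G_+$, and $\rho$ is of order three, $\rho^3=\mathrm{id}$.
   Context: A Lie group $G$ with Lie algebra $\mathfrak g$ is symmetrically factorizable if $\mathfrak g=\mathfrak g_+\oplus\mathfrak g_-$ as a vector space with $\mathfrak g_\pm$ Lie subalgebras, and there is $\theta\in G$ (a conjugating element) with $\theta G_-=G_+\theta$, where $G_\pm$ are the Lie subgroups corresponding to $\mathfrak g_\pm$. For $g$ in a Zariski open dense subset one has $g=g_+g_-^{-1}$ with $g_\pm\in G_\pm$, and $(h)_\pm$ denotes these factors of $h$. *)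

theory Defs
  imports "HOL-Algebra.Algebra"
begin

text \<open>Abstract group-theoretic rendering of a symmetrically factorizable group.
  \<open>Gp\<close>, \<open>Gm\<close> play the roles of G_+ and G_-; \<open>th\<close> is the conjugating element.\<close>

definition sym_factorizable :: "('a, 'b) monoid_scheme \<Rightarrow> 'a set \<Rightarrow> 'a set \<Rightarrow> 'a \<Rightarrow> bool" where
  "sym_factorizable G Gp Gm th \<longleftrightarrow>
     group G \<and> subgroup Gp G \<and> subgroup Gm G \<and> th \<in> carrier G \<and>
     th <#\<^bsub>G\<^esub> Gm = Gp #>\<^bsub>G\<^esub> th"

definition fact_dom :: "('a, 'b) monoid_scheme \<Rightarrow> 'a set \<Rightarrow> 'a set \<Rightarrow> 'a \<Rightarrow> bool" where
  "fact_dom G Gp Gm g \<longleftrightarrow> g \<in> carrier G \<and>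
     (\<exists>!p. p \<in> Gp \<and> (\<exists>m\<in>Gm. g = p \<otimes>\<^bsub>G\<^esub> inv\<^bsub>G\<^esub> m))"

definition plus_part :: "('a, 'b) monoid_scheme \<Rightarrow> 'a set \<Rightarrow> 'a set \<Rightarrow> 'a \<Rightarrow> 'a" where
  "plus_part G Gp Gm g = (THE p. p \<in> Gp \<and> (\<exists>m\<in>Gm. g = p \<otimes>\<^bsub>G\<^esub> inv\<^bsub>G\<^esub> m))"

definition rho_dom :: "('a, 'b) monoid_scheme \<Rightarrow> 'a set \<Rightarrow> 'a set \<Rightarrow> 'a \<Rightarrow> 'a \<Rightarrow> bool" where
  "rho_dom G Gp Gm th x \<longleftrightarrow> x \<in> Gp \<and> fact_dom G Gp Gm (th \<otimes>\<^bsub>G\<^esub> x)"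

definition rho :: "('a, 'b) monoid_scheme \<Rightarrow> 'a set \<Rightarrow> 'a set \<Rightarrow> 'a \<Rightarrow> 'a \<Rightarrow> 'a" where
  "rho G Gp Gm th x = inv\<^bsub>G\<^esub> (plus_part G Gp Gm (th \<otimes>\<^bsub>G\<^esub> x))"

definition rho_inv :: "('a, 'b) monoid_scheme \<Rightarrow> 'a set \<Rightarrow> 'a set \<Rightarrow> 'a \<Rightarrow> 'a \<Rightarrow> 'a" where
  "rho_inv G Gp Gm th x = (THE z. rho_dom G Gp Gm th z \<and> rho G Gp Gm th z = x)"

end

theory Submission
  imports Defs
begin

lemma (in group) canc1 [simp]: "x \<in> carrier G \<Longrightarrow> y \<in> carrier G \<Longrightarrow> x \<otimes> (inv x \<otimes> y) = y"
  by (simp add: m_assoc [symmetric])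
lemma (in group) canc2 [simp]: "x \<in> carrier G \<Longrightarrow> y \<in> carrier G \<Longrightarrow> inv x \<otimes> (x \<otimes> y) = y"
  by (metis m_assoc l_inv l_one inv_closed)

locale sfx = group G for G (structure) +
  fixes Gp Gm th
  assumes sp: "subgroup Gp G" and sm: "subgroup Gm G" and thc: "th \<in> carrier G"
    and cos: "th <# Gm = Gp #> th"
    and cen: "\<forall>g\<in>carrier G. th \<otimes> th \<otimes> g = g \<otimes> (th \<otimes> th)"
begin

lemma cp: "a \<in> Gp \<Longrightarrow> a \<in> carrier G" by (rule subgroup.mem_carrier[OF sp])
lemma cm: "a \<in> Gm \<Longrightarrow> a \<in> carrier G" by (rule subgroup.mem_carrier[OF sm])

lemma M1: assumes "a \<in> Gm" shows "th \<otimes> a \<otimes> inv th \<in> Gp"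
proof -
  have "th \<otimes> a \<in> th <# Gm" using assms unfolding l_coset_def by blast
  then obtain h where h: "h \<in> Gp" "th \<otimes> a = h \<otimes> th" using cos unfolding r_coset_def by auto
  then have "th \<otimes> a \<otimes> inv th = h" using thc cp[OF h(1)] by (simp add: m_assoc)
  then show ?thesis using h by simp
qed

lemma M2: assumes "b \<in> Gp" shows "inv th \<otimes> b \<otimes> th \<in> Gm"
proof -
  have "b \<otimes> th \<in> Gp #> th" using assms unfolding r_coset_def by blast
  then obtain h where h: "h \<in> Gm" "b \<otimes> th = th \<otimes> h" using cos unfolding l_coset_def by auto
  then have "inv th \<otimes> b \<otimes> th = h" using thc cm[OF h(1)] cp[OF assms] by (simp add: m_assoc)
  then show ?thesis using h by simp
qed

lemma DC: assumes g: "g \<in> carrier G" shows "inv th \<otimes> g \<otimes> th = th \<otimes> g \<otimes> inv th"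
proof -
  have c: "th \<otimes> th \<otimes> g = g \<otimes> (th \<otimes> th)" using cen g by blast
  have a: "inv th \<otimes> g \<otimes> th = inv th \<otimes> (g \<otimes> (th \<otimes> th)) \<otimes> inv th"
    using g thc by (simp add: m_assoc)
  have b: "th \<otimes> g \<otimes> inv th = inv th \<otimes> (th \<otimes> th \<otimes> g) \<otimes> inv th"
    using g thc by (simp add: m_assoc)
  show ?thesis unfolding a b c ..
qed

lemma M3: assumes "b \<in> Gp" shows "th \<otimes> b \<otimes> inv th \<in> Gm"
  using M2[OF assms] DC[OF cp[OF assms]] by simp

lemma uniq:
  assumes triv: "Gp \<inter> Gm \<subseteq> {\<one>}" and p: "p \<in> Gp" and m: "m \<in> Gm" and g: "g = p \<otimes> inv m"
  shows "fact_dom G Gp Gm g \<and> plus_part G Gp Gm g = p"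
proof -
  have P: "p' = p" if "p' \<in> Gp" "m' \<in> Gm" "g = p' \<otimes> inv m'" for p' m'
  proof -
    have e: "p \<otimes> inv m = p' \<otimes> inv m'" using that g by simp
    have c: "inv p' \<otimes> p = inv m' \<otimes> m"
    proof -
      have "inv p' \<otimes> (p \<otimes> inv m) \<otimes> m = inv p' \<otimes> (p' \<otimes> inv m') \<otimes> m" using e by simp
      then show ?thesis using cp cm that p m by (simp add: m_assoc)
    qed
    have "inv p' \<otimes> p \<in> Gp" using sp that p by (simp add: subgroup.m_closed subgroup.m_inv_closed)
    moreover have "inv m' \<otimes> m \<in> Gm" using sm that m by (simp add: subgroup.m_closed subgroup.m_inv_closed)
    ultimately have "inv p' \<otimes> p = \<one>" using c triv by auto
    then show ?thesis using cp that p by (metis inv_equality inv_inv m_closed inv_closed)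
  qed
  have ex: "p \<in> Gp \<and> (\<exists>m\<in>Gm. g = p \<otimes> inv m)" using p m g by blast
  have "g \<in> carrier G" using g cp cm p m by simp
  then have "fact_dom G Gp Gm g" unfolding fact_dom_def using ex P by blast
  moreover have "plus_part G Gp Gm g = p" unfolding plus_part_def
    using ex P by (intro the_equality) blast+
  ultimately show ?thesis by simp
qed

lemma trivial: assumes "fact_dom G Gp Gm g" shows "Gp \<inter> Gm \<subseteq> {\<one>}"
proof
  fix c assume c: "c \<in> Gp \<inter> Gm"
  from assms obtain p m where pm: "p \<in> Gp" "m \<in> Gm" "g = p \<otimes> inv m"
    and u: "\<And>p'. p' \<in> Gp \<and> (\<exists>m\<in>Gm. g = p' \<otimes> inv m) \<Longrightarrow> p' = p"
    unfolding fact_dom_def by blast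
  have "g = (p \<otimes> c) \<otimes> inv (m \<otimes> c)" using pm c cp cm by (simp add: m_assoc inv_mult_group)
  moreover have "p \<otimes> c \<in> Gp" "m \<otimes> c \<in> Gm" using pm c sp sm by (auto simp: subgroup.m_closed)
  ultimately have "p \<otimes> c = p" using u by blast
  then show "c \<in> {\<one>}" using pm c cp by simp
qed

lemma step:
  assumes triv: "Gp \<inter> Gm \<subseteq> {\<one>}" and z: "z \<in> Gp" and p: "p \<in> Gp" and m: "m \<in> Gm"
    and e: "th \<otimes> z = p \<otimes> inv m"
  shows "rho_dom G Gp Gm th z" "rho G Gp Gm th z = inv p"
    "th \<otimes> inv p = (th \<otimes> inv m \<otimes> inv th) \<otimes> inv (th \<otimes> z \<otimes> inv th)"
    "th \<otimes> inv m \<otimes> inv th \<in> Gp" "th \<otimes> z \<otimes> inv th \<in> Gm"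
proof -
  show "rho_dom G Gp Gm th z" unfolding rho_dom_def using uniq[OF triv p m e] z by simp
  show "rho G Gp Gm th z = inv p" unfolding rho_def using uniq[OF triv p m e] by simp
  have pe: "p = th \<otimes> z \<otimes> m"
  proof -
    have "th \<otimes> z \<otimes> m = p \<otimes> inv m \<otimes> m" using e by simp
    then show ?thesis using p m cp cm by (simp add: m_assoc)
  qed
  show "th \<otimes> inv p = (th \<otimes> inv m \<otimes> inv th) \<otimes> inv (th \<otimes> z \<otimes> inv th)"
    unfolding pe using thc z m cp cm by (simp add: m_assoc inv_mult_group)
  show "th \<otimes> inv m \<otimes> inv th \<in> Gp" by (rule M1[OF subgroup.m_inv_closed[OF sm m]])
  show "th \<otimes> z \<otimes> inv th \<in> Gm" by (rule M3[OF z])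
qed

lemma cube:
  assumes x: "rho_dom G Gp Gm th x"
  shows "rho_dom G Gp Gm th (rho G Gp Gm th x)
            \<and> rho_dom G Gp Gm th (rho G Gp Gm th (rho G Gp Gm th x))
            \<and> rho G Gp Gm th (rho G Gp Gm th (rho G Gp Gm th x)) = x"
proof -
  have xp: "x \<in> Gp" and fd: "fact_dom G Gp Gm (th \<otimes> x)" using x unfolding rho_dom_def by auto
  have triv: "Gp \<inter> Gm \<subseteq> {\<one>}" using trivial[OF fd] .
  obtain p m where pm: "p \<in> Gp" "m \<in> Gm" "th \<otimes> x = p \<otimes> inv m" using fd unfolding fact_dom_def by blast
  note s1 = step[OF triv xp pm]
  have ip: "inv p \<in> Gp" by (rule subgroup.m_inv_closed[OF sp pm(1)])
  note s2 = step[OF triv ip s1(4) s1(5) s1(3)]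
  have ip2: "inv (th \<otimes> inv m \<otimes> inv th) \<in> Gp" by (rule subgroup.m_inv_closed[OF sp s1(4)])
  note s3 = step[OF triv ip2 s2(4) s2(5) s2(3)]
  have xc: "x \<in> carrier G" using cp xp .
  have "th \<otimes> inv (th \<otimes> x \<otimes> inv th) \<otimes> inv th = th \<otimes> (th \<otimes> inv x \<otimes> inv th) \<otimes> inv th"
    using xc thc by (simp add: m_assoc inv_mult_group)
  also have "\<dots> = th \<otimes> (inv th \<otimes> inv x \<otimes> th) \<otimes> inv th" using DC[of "inv x"] xc by simp
  also have "\<dots> = inv x" using xc thc by (simp add: m_assoc)
  finally have ee: "th \<otimes> inv (th \<otimes> x \<otimes> inv th) \<otimes> inv th = inv x" .
  show ?thesis using s1(1,2) s2(1,2) s3(1,2) ee xc by simp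
qed

lemma rho2:
  assumes x: "rho_dom G Gp Gm th x" and pm: "p \<in> Gp" "m \<in> Gm" "th \<otimes> x = p \<otimes> inv m"
  shows "rho G Gp Gm th x = inv p" "rho G Gp Gm th (rho G Gp Gm th x) = inv (th \<otimes> inv m \<otimes> inv th)"
proof -
  have xp: "x \<in> Gp" and fd: "fact_dom G Gp Gm (th \<otimes> x)" using x unfolding rho_dom_def by auto
  have triv: "Gp \<inter> Gm \<subseteq> {\<one>}" using trivial[OF fd] .
  note s1 = step[OF triv xp pm]
  have ip: "inv p \<in> Gp" by (rule subgroup.m_inv_closed[OF sp pm(1)])
  note s2 = step[OF triv ip s1(4) s1(5) s1(3)]
  show "rho G Gp Gm th x = inv p" using s1(2) .
  show "rho G Gp Gm th (rho G Gp Gm th x) = inv (th \<otimes> inv m \<otimes> inv th)" using s1(2) s2(2) by simp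
qed

lemma rinv: assumes x: "rho_dom G Gp Gm th x"
  shows "rho_inv G Gp Gm th x = rho G Gp Gm th (rho G Gp Gm th x)"
  unfolding rho_inv_def
proof (rule the_equality)
  show "rho_dom G Gp Gm th (rho G Gp Gm th (rho G Gp Gm th x)) \<and>
    rho G Gp Gm th (rho G Gp Gm th (rho G Gp Gm th x)) = x" using cube[OF x] by simp
  fix z assume z: "rho_dom G Gp Gm th z \<and> rho G Gp Gm th z = x"
  then show "z = rho G Gp Gm th (rho G Gp Gm th x)" using cube[of z] by auto
qed

lemma part1:
  assumes x: "rho_dom G Gp Gm th x" and y: "rho_dom G Gp Gm th y" and xy: "rho_dom G Gp Gm th (x \<otimes> y)"
  shows "inv (rho G Gp Gm th y) \<otimes>
                rho G Gp Gm th (rho G Gp Gm th x \<otimes> inv (rho G Gp Gm th (x \<otimes> y)))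
              = rho_inv G Gp Gm th x"
proof -
  have xp: "x \<in> Gp" and fd: "fact_dom G Gp Gm (th \<otimes> x)" using x unfolding rho_dom_def by auto
  have yp: "y \<in> Gp" using y unfolding rho_dom_def by auto
  have triv: "Gp \<inter> Gm \<subseteq> {\<one>}" using trivial[OF fd] .
  obtain p m where pm: "p \<in> Gp" "m \<in> Gm" "th \<otimes> x = p \<otimes> inv m" using fd unfolding fact_dom_def by blast
  obtain q n where qn: "q \<in> Gp" "n \<in> Gm" "th \<otimes> y = q \<otimes> inv n" using y unfolding rho_dom_def fact_dom_def by blast
  obtain r k where rk: "r \<in> Gp" "k \<in> Gm" "th \<otimes> (x \<otimes> y) = r \<otimes> inv k" using xy unfolding rho_dom_def fact_dom_def by blast
  note X = rho2[OF x pm] and Y = rho2[OF y qn] and XY = rho2[OF xy rk]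
  have xc: "x \<in> carrier G" "y \<in> carrier G" using cp xp yp by auto
  have sol: "a = th \<otimes> z \<otimes> b" if "a \<in> carrier G" "b \<in> carrier G" "z \<in> carrier G" "th \<otimes> z = a \<otimes> inv b" for a b z
  proof -
    have "th \<otimes> z \<otimes> b = a \<otimes> inv b \<otimes> b" using that by simp
    then show ?thesis using that by (simp add: m_assoc)
  qed
  have pe: "p = th \<otimes> x \<otimes> m" by (rule sol[OF cp[OF pm(1)] cm[OF pm(2)] xc(1) pm(3)])
  have qe: "q = th \<otimes> y \<otimes> n" by (rule sol[OF cp[OF qn(1)] cm[OF qn(2)] xc(2) qn(3)])
  have re: "r = th \<otimes> (x \<otimes> y) \<otimes> k" using sol[of r k "x \<otimes> y"] rk cp cm xc thc by simp
  define w where "w = rho G Gp Gm th x \<otimes> inv (rho G Gp Gm th (x \<otimes> y))"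
  have we: "w = inv p \<otimes> r" unfolding w_def X(1) XY(1) using rk cp by simp
  have wp: "w \<in> Gp" unfolding we using pm rk sp by (simp add: subgroup.m_closed subgroup.m_inv_closed)
  have pp: "th \<otimes> inv m \<otimes> inv th \<otimes> q \<in> Gp" using M1[of "inv m"] pm qn sm sp
    by (simp add: subgroup.m_closed subgroup.m_inv_closed)
  have mm: "inv k \<otimes> n \<in> Gm" using rk qn sm by (simp add: subgroup.m_closed subgroup.m_inv_closed)
  have tw: "th \<otimes> w = (th \<otimes> inv m \<otimes> inv th \<otimes> q) \<otimes> inv (inv k \<otimes> n)"
    unfolding we using xc thc cp[OF pm(1)] cm[OF pm(2)] cp[OF qn(1)] cm[OF qn(2)] cp[OF rk(1)] cm[OF rk(2)]
    by (subst pe, subst qe, subst re) (simp add: m_assoc inv_mult_group)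
  have rw: "rho G Gp Gm th w = inv (th \<otimes> inv m \<otimes> inv th \<otimes> q)"
    unfolding rho_def using uniq[OF triv pp mm tw] by simp
  show ?thesis unfolding rinv[OF x] X(2) w_def[symmetric] rw Y(1)
    using thc pm qn cp cm by (simp add: m_assoc inv_mult_group)
qed

end

theorem mainTheorem8:
  fixes G :: "('a, 'b) monoid_scheme" and Gp Gm :: "'a set" and th :: 'a
  assumes sf: "sym_factorizable G Gp Gm th"
    and central: "\<forall>g\<in>carrier G. th \<otimes>\<^bsub>G\<^esub> th \<otimes>\<^bsub>G\<^esub> g = g \<otimes>\<^bsub>G\<^esub> (th \<otimes>\<^bsub>G\<^esub> th)"
  shows "(\<forall>x y. rho_dom G Gp Gm th x \<and> rho_dom G Gp Gm th y
            \<and> rho_dom G Gp Gm th (x \<otimes>\<^bsub>G\<^esub> y)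
            \<and> rho_dom G Gp Gm th (rho G Gp Gm th x \<otimes>\<^bsub>G\<^esub> inv\<^bsub>G\<^esub> (rho G Gp Gm th (x \<otimes>\<^bsub>G\<^esub> y)))
          \<longrightarrow> inv\<^bsub>G\<^esub> (rho G Gp Gm th y) \<otimes>\<^bsub>G\<^esub>
                rho G Gp Gm th (rho G Gp Gm th x \<otimes>\<^bsub>G\<^esub> inv\<^bsub>G\<^esub> (rho G Gp Gm th (x \<otimes>\<^bsub>G\<^esub> y)))
              = rho_inv G Gp Gm th x)
       \<and> (\<forall>x. rho_dom G Gp Gm th x
          \<longrightarrow> rho_dom G Gp Gm th (rho G Gp Gm th x)
            \<and> rho_dom G Gp Gm th (rho G Gp Gm th (rho G Gp Gm th x))
            \<and> rho G Gp Gm th (rho G Gp Gm th (rho G Gp Gm th x)) = x)"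
proof -
  interpret sfx G Gp Gm th
    using sf central unfolding sym_factorizable_def sfx_def sfx_axioms_def by simp
  show ?thesis
    by (intro conjI allI impI) (simp_all add: part1 cube)
qed

end
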